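(* Consider Model 2 (context). Suppose Population EM and Sample-based EM (with $n$ samples) for Model 2 are started from the same initial parameters: $\hat{\boldsymbol\mu}_1^{\langle 0\rangle}=\boldsymbol\mu_1^{\langle 0\rangle}$ and $\hat{\boldsymbol\mu}_2^{\langle 0\rangle}=\boldsymbol\mu_2^{\langle 0\rangle}$. Then for each fixed iteration $t\ge0$, $\hat{\boldsymbol\mu}_1^{\langle t\rangle}\to\boldsymbol\mu_1^{\langle t\rangle}$ and $\hat{\boldsymbol\mu}_2^{\langle t\rangle}\to\boldsymbol\mu_2^{\langle t\rangle}$ in probability as $n\to\infty$.
   Context: $\phi_d$ is the density of $N(\mathbf 0,I_d)$ (the known covariance is taken to be $I_d$). Model 2: $\boldsymbol\mu_1^*,\boldsymbol\mu_2^*\in\mathbb{R}^d$, $\mathbf Y\sim\tfrac12N(\boldsymbol\mu_1^*,I_d)+\tfrac12N(\boldsymbol\mu_2^*,I_d)$. Let $v_d(\mathbf y,\boldsymbol\mu_1,\boldsymbol\mu_2)=\frac{\phi_d(\mathbf y-\boldsymbol\mu_1)}{\phi_d(\mathbf y-\boldsymbol\mu_1)+\phi_d(\mathbf y-\boldsymbol\mu_2)}$. Population EM: $\boldsymbol\mu_1^{\langle t+1\rangle}=\frac{\mathbb{E}[v_d(\mathbf Y,\boldsymbol\mu_1^{\langle t\rangle},\boldsymbol\mu_2^{\langle t\rangle})\mathbf Y]}{\mathbb{E}[v_d(\mathbf Y,\boldsymbol\mu_1^{\langle t\rangle},\boldsymbol\mu_2^{\langle t\rangle})]}$, $\boldsymbol\mu_2^{\langle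 t+1\rangle}=\frac{\mathbb{E}[(1-v_d(\mathbf Y,\cdot))\mathbf Y]}{\mathbb{E}[1-v_d(\mathbf Y,\cdot)]}$ (with $v_d$ evaluated at $(\boldsymbol\mu_1^{\langle t\rangle},\boldsymbol\mu_2^{\langle t\rangle})$). Sample-based EM: with $\mathbf y_1,\dots,\mathbf y_n$ i.i.d. copies of $\mathbf Y$, $\hat{\boldsymbol\mu}_1^{\langle t+1\rangle}=\frac{\sum_{i=1}^n v_d(\mathbf y_i,\hat{\boldsymbol\mu}_1^{\langle t\rangle},\hat{\boldsymbol\mu}_2^{\langle t\rangle})\mathbf y_i}{\sum_{i=1}^n v_d(\mathbf y_i,\hat{\boldsymbol\mu}_1^{\langle t\rangle},\hat{\boldsymbol\mu}_2^{\langle t\rangle})}$, $\hat{\boldsymbol\mu}_2^{\langle t+1\rangle}=\frac{\sum_{i=1}^n (1-v_d(\mathbf y_i,\hat{\boldsymbol\mu}_1^{\langle t\rangle},\hat{\boldsymbol\mu}_2^{\langle t\rangle}))\mathbf y_i}{\sum_{i=1}^n (1-v_d(\mathbf y_i,\hat{\boldsymbol\mu}_1^{\langle t\rangle},\hat{\boldsymbol\mu}_2^{\langle t\rangle}))}$. *)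

theory Defs
  imports "HOL-Probability.Probability"
begin

definition phi_d :: "real ^ 'n \<Rightarrow> real" where
  "phi_d y = (2 * pi) powr (- real CARD('n) / 2) * exp (- (norm y)\<^sup>2 / 2)"

definition v_d :: "real ^ 'n \<Rightarrow> real ^ 'n \<Rightarrow> real ^ 'n \<Rightarrow> real" where
  "v_d y mu1 mu2 = phi_d (y - mu1) / (phi_d (y - mu1) + phi_d (y - mu2))"

definition model2_law :: "real ^ 'n \<Rightarrow> real ^ 'n \<Rightarrow> (real ^ 'n) measure" where
  "model2_law mu1s mu2s =
     density lborel (\<lambda>y. ennreal (1/2 * phi_d (y - mu1s) + 1/2 * phi_d (y - mu2s)))"

definition pop_em_step :: "real ^ 'n \<Rightarrow> real ^ 'n \<Rightarrow> (real ^ 'n) \<times> (real ^ 'n) \<Rightarrow> (real ^ 'n) \<times> (real ^ 'n)" where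
  "pop_em_step mu1s mu2s p =
     (case p of (m1, m2) \<Rightarrow>
       (inverse (integral\<^sup>L (model2_law mu1s mu2s) (\<lambda>y. v_d y m1 m2))
          *\<^sub>R integral\<^sup>L (model2_law mu1s mu2s) (\<lambda>y. v_d y m1 m2 *\<^sub>R y),
        inverse (integral\<^sup>L (model2_law mu1s mu2s) (\<lambda>y. 1 - v_d y m1 m2))
          *\<^sub>R integral\<^sup>L (model2_law mu1s mu2s) (\<lambda>y. (1 - v_d y m1 m2) *\<^sub>R y)))"

definition pop_em :: "real ^ 'n \<Rightarrow> real ^ 'n \<Rightarrow> (real ^ 'n) \<times> (real ^ 'n) \<Rightarrow> nat \<Rightarrow> (real ^ 'n) \<times> (real ^ 'n)" where
  "pop_em mu1s mu2s p0 t = (pop_em_step mu1s mu2s ^^ t) p0"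

definition samp_em_step :: "nat \<Rightarrow> (nat \<Rightarrow> real ^ 'n) \<Rightarrow> (real ^ 'n) \<times> (real ^ 'n) \<Rightarrow> (real ^ 'n) \<times> (real ^ 'n)" where
  "samp_em_step n ys p =
     (case p of (m1, m2) \<Rightarrow>
       (inverse (\<Sum>i<n. v_d (ys i) m1 m2) *\<^sub>R (\<Sum>i<n. v_d (ys i) m1 m2 *\<^sub>R ys i),
        inverse (\<Sum>i<n. 1 - v_d (ys i) m1 m2) *\<^sub>R (\<Sum>i<n. (1 - v_d (ys i) m1 m2) *\<^sub>R ys i)))"

definition samp_em :: "nat \<Rightarrow> (nat \<Rightarrow> real ^ 'n) \<Rightarrow> (real ^ 'n) \<times> (real ^ 'n) \<Rightarrow> nat \<Rightarrow> (real ^ 'n) \<times> (real ^ 'n)" where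
  "samp_em n ys p0 t = (samp_em_step n ys ^^ t) p0"

end

theory Submission
  imports Defs
begin



definition cip :: "'a measure \<Rightarrow> (nat \<Rightarrow> 'a \<Rightarrow> 'b::metric_space) \<Rightarrow> 'b \<Rightarrow> bool" where
  "cip M X c \<longleftrightarrow> (\<forall>\<epsilon>>0. \<forall>\<delta>>0. eventually (\<lambda>n. \<exists>A\<in>sets M.
      {\<omega>\<in>space M. dist (X n \<omega>) c > \<epsilon>} \<subseteq> A \<and> measure M A \<le> \<delta>) sequentially)"

lemma cip_const: "cip M (\<lambda>n \<omega>. c) c"
  unfolding cip_def by (auto intro!: always_eventually bexI[of _ "{}"])

lemma cip_dist: "cip M X a \<Longrightarrow> cip M (\<lambda>n \<omega>. dist (X n \<omega>) a) (0::real)"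
  unfolding cip_def by simp

lemma cip_final:
  assumes "prob_space M" "cip M X c" "\<epsilon> > 0"
  shows "(\<lambda>n. measure M {\<omega>\<in>space M. dist (X n \<omega>) c > \<epsilon>}) \<longlonglongrightarrow> 0"
proof (rule LIMSEQ_I)
  fix r :: real assume r: "r > 0"
  interpret prob_space M by fact
  have "eventually (\<lambda>n. \<exists>A\<in>sets M.
      {\<omega>\<in>space M. dist (X n \<omega>) c > \<epsilon>} \<subseteq> A \<and> measure M A \<le> r/2) sequentially"
    using assms(2,3) r unfolding cip_def by (meson half_gt_zero)
  then obtain N where N: "\<And>n. n \<ge> N \<Longrightarrow> \<exists>A\<in>sets M.
      {\<omega>\<in>space M. dist (X n \<omega>) c > \<epsilon>} \<subseteq> A \<and> measure M A \<le> r/2"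
    unfolding eventually_sequentially by auto
  show "\<exists>no. \<forall>n\<ge>no. norm (measure M {\<omega>\<in>space M. dist (X n \<omega>) c > \<epsilon>} - 0) < r"
  proof (intro exI allI impI)
    fix n assume "n \<ge> N"
    then obtain A where A: "A \<in> sets M" "{\<omega>\<in>space M. dist (X n \<omega>) c > \<epsilon>} \<subseteq> A" "measure M A \<le> r/2"
      using N by blast
    let ?S = "{\<omega>\<in>space M. dist (X n \<omega>) c > \<epsilon>}"
    have "measure M ?S \<le> r/2"
    proof (cases "?S \<in> sets M")
      case True
      then show ?thesis using A finite_measure_mono[OF A(2) A(1)] by linarith
    next
      case False
      then show ?thesis using r by (simp add: measure_notin_sets)
    qed
    then show "norm (measure M ?S - 0) < r" using r by simp
  qed
qed

lemma cip_cover: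
  fixes X :: "'i \<Rightarrow> nat \<Rightarrow> 'a \<Rightarrow> 'b::metric_space" and Z :: "nat \<Rightarrow> 'a \<Rightarrow> 'c::metric_space"
  assumes "prob_space M" "finite I" "\<And>i. i \<in> I \<Longrightarrow> cip M (X i) (c i)"
    and cov: "\<And>\<epsilon>. \<epsilon> > 0 \<Longrightarrow> \<exists>\<epsilon>'>0. \<forall>n. \<forall>\<omega>\<in>space M. dist (Z n \<omega>) d > \<epsilon> \<longrightarrow>
        (\<exists>i\<in>I. dist (X i n \<omega>) (c i) > \<epsilon>')"
  shows "cip M Z d"
  unfolding cip_def
proof (intro allI impI)
  fix \<epsilon> \<delta> :: real assume e: "\<epsilon> > 0" and d: "\<delta> > 0"
  interpret prob_space M by fact
  obtain e' where e': "e' > 0" "\<And>n \<omega>. \<omega>\<in>space M \<Longrightarrow> dist (Z n \<omega>) d > \<epsilon> \<Longrightarrow>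
        (\<exists>i\<in>I. dist (X i n \<omega>) (c i) > e')" using cov[OF e] by blast
  define d' where "d' = \<delta> / (real (card I) + 1)"
  have d': "d' > 0" using d by (simp add: d'_def)
  have "eventually (\<lambda>n. \<forall>i\<in>I. \<exists>A\<in>sets M.
      {\<omega>\<in>space M. dist (X i n \<omega>) (c i) > e'} \<subseteq> A \<and> measure M A \<le> d') sequentially"
    using assms(2) apply (rule eventually_ball_finite)
    using assms(3) e' d' unfolding cip_def by blast
  then show "eventually (\<lambda>n. \<exists>A\<in>sets M.
      {\<omega>\<in>space M. dist (Z n \<omega>) d > \<epsilon>} \<subseteq> A \<and> measure M A \<le> \<delta>) sequentially"
  proof eventually_elim
    case (elim n)
    then obtain A where A: "\<And>i. i\<in>I \<Longrightarrow> A i \<in> sets M \<and> {\<omega>\<in>space M. dist (X i n \<omega>) (c i) > e'} \<subseteq> A i \<and> measure M (A i) \<le> d'"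
      by metis
    show ?case
    proof (intro bexI conjI)
      show "(\<Union>i\<in>I. A i) \<in> sets M" using A assms(2) by auto
      show "{\<omega>\<in>space M. dist (Z n \<omega>) d > \<epsilon>} \<subseteq> (\<Union>i\<in>I. A i)"
        using A e'(2) by blast
      have "measure M (\<Union>i\<in>I. A i) \<le> (\<Sum>i\<in>I. measure M (A i))"
        using A assms(2) by (intro measure_UNION_le) auto
      also have "\<dots> \<le> (\<Sum>i\<in>I. d')" using A by (intro sum_mono) auto
      also have "\<dots> = real (card I) * d'" by simp
      also have "\<dots> \<le> \<delta>" using d d' unfolding d'_def by (simp add: field_simps)
      finally show "measure M (\<Union>i\<in>I. A i) \<le> \<delta>" .
    qed
  qed
qed

lemma cip_cont:
  assumes "prob_space M" "cip M X c" "isCont g c"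
  shows "cip M (\<lambda>n \<omega>. g (X n \<omega>)) (g c)"
proof (rule cip_cover[where I="{()}" and X="\<lambda>_. X" and c="\<lambda>_. c"])
  fix \<epsilon> :: real assume "\<epsilon> > 0"
  then obtain \<eta> where eta: "\<eta> > 0" "\<And>x. dist x c < \<eta> \<Longrightarrow> dist (g x) (g c) < \<epsilon>"
    using assms(3) unfolding continuous_at_eps_delta by metis
  show "\<exists>\<epsilon>'>0. \<forall>n. \<forall>\<omega>\<in>space M. dist (g (X n \<omega>)) (g c) > \<epsilon> \<longrightarrow>
        (\<exists>i\<in>{()}. dist (X n \<omega>) c > \<epsilon>')"
  proof (intro exI[of _ "\<eta>/2"] conjI allI ballI impI)
    fix n \<omega> assume "dist (g (X n \<omega>)) (g c) > \<epsilon>"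
    then have "\<not> dist (X n \<omega>) c < \<eta>" using eta(2) by force
    then show "\<exists>i\<in>{()}. dist (X n \<omega>) c > \<eta>/2" using eta(1) by auto
  qed (use eta(1) in simp)
qed (use assms in auto)

lemma cip_pair:
  assumes "prob_space M" "cip M X a" "cip M Y b"
  shows "cip M (\<lambda>n \<omega>. (X n \<omega>, Y n \<omega>)) (a, b)"
proof (rule cip_cover[where I="{True,False}" and X="\<lambda>i. if i then (\<lambda>n \<omega>. dist (X n \<omega>) a) else (\<lambda>n \<omega>. dist (Y n \<omega>) b)"
        and c="\<lambda>i. 0::real"])
  fix \<epsilon> :: real assume e: "\<epsilon> > 0"
  show "\<exists>\<epsilon>'>0. \<forall>n. \<forall>\<omega>\<in>space M. dist (X n \<omega>, Y n \<omega>) (a, b) > \<epsilon> \<longrightarrow>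
     (\<exists>i\<in>{True,False}. dist ((if i then (\<lambda>n \<omega>. dist (X n \<omega>) a) else (\<lambda>n \<omega>. dist (Y n \<omega>) b)) n \<omega>) 0 > \<epsilon>')"
  proof (intro exI[of _ "\<epsilon>/2"] conjI allI ballI impI)
    fix n \<omega> assume "dist (X n \<omega>, Y n \<omega>) (a, b) > \<epsilon>"
    moreover have "dist (X n \<omega>, Y n \<omega>) (a, b) \<le> dist (X n \<omega>) a + dist (Y n \<omega>) b"
      by (simp add: dist_Pair_Pair sqrt_sum_squares_le_sum)
    ultimately have "dist (X n \<omega>) a > \<epsilon>/2 \<or> dist (Y n \<omega>) b > \<epsilon>/2" by linarith
    then show "\<exists>i\<in>{True,False}. dist ((if i then (\<lambda>n \<omega>. dist (X n \<omega>) a) else (\<lambda>n \<omega>. dist (Y n \<omega>) b)) n \<omega>) 0 > \<epsilon>/2"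
      by auto
  qed (use e in auto)
next
  show "prob_space M" by fact
next
  show "finite {True, False}" by simp
next
  fix i assume "i \<in> {True,False}"
  then show "cip M (if i then (\<lambda>n \<omega>. dist (X n \<omega>) a) else (\<lambda>n \<omega>. dist (Y n \<omega>) b)) 0"
    using cip_dist[OF assms(2)] cip_dist[OF assms(3)] by (cases i) simp_all
qed




lemma indep_pair:
  fixes Y :: "nat \<Rightarrow> 'a \<Rightarrow> 'b::topological_space"
  assumes "prob_space M" "prob_space.indep_vars M (\<lambda>_. borel) Y UNIV" "i \<noteq> j"
    and [measurable]: "h \<in> borel_measurable borel" "k \<in> borel_measurable borel"
  shows "prob_space.indep_var M borel (\<lambda>\<omega>. h (Y i \<omega>) :: real) borel (\<lambda>\<omega>. k (Y j \<omega>) :: real)"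
proof -
  interpret prob_space M by fact
  have "indep_var borel ((\<lambda>f. h (f i)) \<circ> (\<lambda>\<omega>. restrict (\<lambda>i. Y i \<omega>) {i}))
     borel ((\<lambda>f. k (f j)) \<circ> (\<lambda>\<omega>. restrict (\<lambda>i. Y i \<omega>) {j}))"
    using assms(3) by (intro indep_var_compose[OF indep_var_restrict[OF assms(2)]]) auto
  also have "((\<lambda>f. h (f i)) \<circ> (\<lambda>\<omega>. restrict (\<lambda>i. Y i \<omega>) {i})) = (\<lambda>\<omega>. h (Y i \<omega>))" by auto
  also have "((\<lambda>f. k (f j)) \<circ> (\<lambda>\<omega>. restrict (\<lambda>i. Y i \<omega>) {j})) = (\<lambda>\<omega>. k (Y j \<omega>))" by auto
  finally show ?thesis .
qed

lemma wlln_real: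
  fixes Y :: "nat \<Rightarrow> 'a \<Rightarrow> 'b::topological_space" and g :: "'b \<Rightarrow> real"
  assumes P: "prob_space M" and Ym[measurable]: "\<And>i. Y i \<in> borel_measurable M"
    and ind: "prob_space.indep_vars M (\<lambda>_. borel) Y UNIV"
    and dist: "\<And>i. distr M borel (Y i) = N"
    and gm[measurable]: "g \<in> borel_measurable borel"
    and g2: "integrable N (\<lambda>y. (g y)\<^sup>2)"
  shows "cip M (\<lambda>n \<omega>. (\<Sum>i<n. g (Y i \<omega>)) / real n) (integral\<^sup>L N g)"
proof -
  interpret prob_space M by fact
  have PN: "prob_space N" using prob_space_distr[OF Ym[of 0]] dist[of 0] by simp
  have sN: "sets N = sets borel" using dist[of 0] by (metis sets_distr)
  have gN[measurable]: "g \<in> borel_measurable N" using gm sN by (simp add: measurable_def space_borel)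
  have gi: "integrable N g"
    by (rule finite_measure.square_integrable_imp_integrable[OF prob_space.finite_measure[OF PN] gN g2])
  define \<mu> where "\<mu> = integral\<^sup>L N g"
  define Z where "Z i \<omega> = g (Y i \<omega>) - \<mu>" for i \<omega>
  have Zm[measurable]: "Z i \<in> borel_measurable M" for i unfolding Z_def by measurable
  have gYi: "integrable M (\<lambda>\<omega>. g (Y i \<omega>))" for i
    using gi dist[of i] integrable_distr_eq[of "Y i" M borel g] by simp
  have gYi2: "integrable M (\<lambda>\<omega>. (g (Y i \<omega>))\<^sup>2)" for i
    using g2 dist[of i] integrable_distr_eq[of "Y i" M borel "\<lambda>y. (g y)\<^sup>2"] by simp
  have EgY: "integral\<^sup>L M (\<lambda>\<omega>. g (Y i \<omega>)) = \<mu>" for i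
    unfolding \<mu>_def using integral_distr[of "Y i" M borel g] dist[of i] by simp
  have Zi: "integrable M (Z i)" for i unfolding Z_def using gYi by auto
  have EZ: "integral\<^sup>L M (Z i) = 0" for i unfolding Z_def using gYi EgY by (simp add: prob_space)
  have Zi2: "integrable M (\<lambda>\<omega>. Z i \<omega> * Z i \<omega>)" for i
    unfolding Z_def using gYi gYi2
    by (simp add: algebra_simps power2_eq_square)
  define \<sigma> where "\<sigma> = integral\<^sup>L M (\<lambda>\<omega>. Z 0 \<omega> * Z 0 \<omega>)"
  have EZ2: "integral\<^sup>L M (\<lambda>\<omega>. Z i \<omega> * Z i \<omega>) = \<sigma>" for i
  proof -
    have "integral\<^sup>L M (\<lambda>\<omega>. Z i \<omega> * Z i \<omega>) = integral\<^sup>L N (\<lambda>y. (g y - \<mu>) * (g y - \<mu>))"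
      unfolding Z_def using integral_distr[of "Y i" M borel "\<lambda>y. (g y - \<mu>) * (g y - \<mu>)"] dist[of i] by simp
    moreover have "integral\<^sup>L M (\<lambda>\<omega>. Z 0 \<omega> * Z 0 \<omega>) = integral\<^sup>L N (\<lambda>y. (g y - \<mu>) * (g y - \<mu>))"
      unfolding Z_def using integral_distr[of "Y 0" M borel "\<lambda>y. (g y - \<mu>) * (g y - \<mu>)"] dist[of 0] by simp
    ultimately show ?thesis unfolding \<sigma>_def by simp
  qed
  have Zij: "integrable M (\<lambda>\<omega>. Z i \<omega> * Z j \<omega>) \<and> integral\<^sup>L M (\<lambda>\<omega>. Z i \<omega> * Z j \<omega>) = (if i = j then \<sigma> else 0)" for i j
  proof (cases "i = j")
    case True then show ?thesis using Zi2 EZ2 by simp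
  next
    case False
    have iv: "indep_var borel (\<lambda>\<omega>. (\<lambda>y. g y - \<mu>) (Y i \<omega>)) borel (\<lambda>\<omega>. (\<lambda>y. g y - \<mu>) (Y j \<omega>))"
      by (rule indep_pair[OF P ind False]) auto
    then have iv': "indep_var borel (Z i) borel (Z j)" unfolding Z_def by simp
    show ?thesis using indep_var_lebesgue_integral[OF iv' Zi Zi] indep_var_integrable[OF iv' Zi Zi] EZ False by simp
  qed
  have S2: "integrable M (\<lambda>\<omega>. (\<Sum>i<n. Z i \<omega>)\<^sup>2) \<and> integral\<^sup>L M (\<lambda>\<omega>. (\<Sum>i<n. Z i \<omega>)\<^sup>2) = real n * \<sigma>" for n
  proof -
    have eq: "(\<lambda>\<omega>. (\<Sum>i<n. Z i \<omega>)\<^sup>2) = (\<lambda>\<omega>. \<Sum>i<n. \<Sum>j<n. Z i \<omega> * Z j \<omega>)"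
      by (simp add: power2_eq_square sum_product)
    have "integral\<^sup>L M (\<lambda>\<omega>. \<Sum>i<n. \<Sum>j<n. Z i \<omega> * Z j \<omega>) = (\<Sum>i<n. \<Sum>j<n. integral\<^sup>L M (\<lambda>\<omega>. Z i \<omega> * Z j \<omega>))"
      using Zij by (simp add: integral_sum)
    also have "\<dots> = (\<Sum>i<n. \<Sum>j<n. if i = j then \<sigma> else 0)" using Zij by simp
    also have "\<dots> = real n * \<sigma>" by simp
    finally show ?thesis unfolding eq using Zij by auto
  qed
  show ?thesis
    unfolding cip_def
  proof (intro allI impI)
    fix \<epsilon> \<delta> :: real assume e: "\<epsilon> > 0" and d: "\<delta> > 0"
    obtain N0 :: nat where N0: "real N0 > \<sigma> / (\<epsilon>\<^sup>2 * \<delta>)" using reals_Archimedean2 by blast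
    show "eventually (\<lambda>n. \<exists>A\<in>sets M.
      {\<omega>\<in>space M. dist ((\<Sum>i<n. g (Y i \<omega>)) / real n) (integral\<^sup>L N g) > \<epsilon>} \<subseteq> A \<and> measure M A \<le> \<delta>) sequentially"
      unfolding eventually_sequentially
    proof (intro exI[of _ "Suc N0"] allI impI)
      fix n assume n: "n \<ge> Suc N0"
      then have npos: "real n > 0" by simp
      let ?A = "{\<omega>\<in>space M. (\<Sum>i<n. Z i \<omega>)\<^sup>2 \<ge> (real n * \<epsilon>)\<^sup>2}"
      show "\<exists>A\<in>sets M.
      {\<omega>\<in>space M. dist ((\<Sum>i<n. g (Y i \<omega>)) / real n) (integral\<^sup>L N g) > \<epsilon>} \<subseteq> A \<and> measure M A \<le> \<delta>"
      proof (intro bexI conjI)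
        show "?A \<in> sets M" by measurable
        show "{\<omega>\<in>space M. dist ((\<Sum>i<n. g (Y i \<omega>)) / real n) (integral\<^sup>L N g) > \<epsilon>} \<subseteq> ?A"
        proof safe
          fix \<omega> assume "\<omega> \<in> space M" "dist ((\<Sum>i<n. g (Y i \<omega>)) / real n) (integral\<^sup>L N g) > \<epsilon>"
          then have "\<bar>(\<Sum>i<n. g (Y i \<omega>)) / real n - \<mu>\<bar> > \<epsilon>" unfolding \<mu>_def dist_real_def by simp
          moreover have "(\<Sum>i<n. Z i \<omega>) = real n * ((\<Sum>i<n. g (Y i \<omega>)) / real n - \<mu>)"
            unfolding Z_def using npos by (simp add: sum_subtractf field_simps)
          ultimately have "\<bar>\<Sum>i<n. Z i \<omega>\<bar> \<ge> real n * \<epsilon>"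
            using npos by (simp add: abs_mult)
          then show "(\<Sum>i<n. Z i \<omega>)\<^sup>2 \<ge> (real n * \<epsilon>)\<^sup>2"
            using npos e by (metis abs_ge_zero abs_of_nonneg mult_nonneg_nonneg less_imp_le of_nat_0_le_iff power2_abs power_mono)
        qed
        have "measure M ?A \<le> integral\<^sup>L M (\<lambda>\<omega>. (\<Sum>i<n. Z i \<omega>)\<^sup>2) / (real n * \<epsilon>)\<^sup>2"
          using S2[of n] npos e by (intro integral_Markov_inequality_measure[where A="space M"]) auto
        also have "\<dots> = \<sigma> / (real n * \<epsilon>\<^sup>2)" using S2[of n] npos by (simp add: power2_eq_square field_simps)
        also have "\<dots> \<le> \<delta>"
        proof -
          have "\<sigma> / (\<epsilon>\<^sup>2 * \<delta>) < real n" using N0 n by simp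
          then have "\<sigma> < real n * (\<epsilon>\<^sup>2 * \<delta>)" using e d by (simp add: field_simps)
          then show ?thesis using e d npos by (simp add: field_simps)
        qed
        finally show "measure M ?A \<le> \<delta>" .
      qed
    qed
  qed
qed




lemma wlln_vec:
  fixes Y :: "nat \<Rightarrow> 'a \<Rightarrow> 'b::topological_space" and g :: "'b \<Rightarrow> 'v::euclidean_space"
  assumes P: "prob_space M" and Ym[measurable]: "\<And>i. Y i \<in> borel_measurable M"
    and ind: "prob_space.indep_vars M (\<lambda>_. borel) Y UNIV"
    and dist: "\<And>i. distr M borel (Y i) = N"
    and gm[measurable]: "g \<in> borel_measurable borel"
    and g2: "integrable N (\<lambda>y. (norm (g y))\<^sup>2)"
  shows "cip M (\<lambda>n \<omega>. (\<Sum>i<n. g (Y i \<omega>)) /\<^sub>R real n) (integral\<^sup>L N g)"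
proof -
  have PN: "prob_space N" using prob_space.prob_space_distr[OF P Ym[of 0]] dist[of 0] by simp
  have sN: "sets N = sets borel" using dist[of 0] by (metis sets_distr)
  have mN: "\<And>f::'b \<Rightarrow> real. f \<in> borel_measurable borel \<Longrightarrow> f \<in> borel_measurable N"
    by (subst measurable_cong_sets[OF sN refl]) simp
  have gN: "g \<in> borel_measurable N" by (subst measurable_cong_sets[OF sN refl]) (rule gm)
  have one: "integrable N (\<lambda>y. 1 + (norm (g y))\<^sup>2)"
    using g2 prob_space.finite_measure[OF PN] by (intro Bochner_Integration.integrable_add) (auto simp: finite_measure.integrable_const)
  have sq: "x \<le> 1 + x\<^sup>2" for x :: real
  proof -
    have "0 \<le> (x - 1)\<^sup>2" by simp
    then have "0 \<le> x\<^sup>2 + 1 - 2 * x" by (simp add: power2_diff)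
    moreover have "0 \<le> x\<^sup>2" by simp
    ultimately show ?thesis by linarith
  qed
  have gi: "integrable N g"
  proof (rule Bochner_Integration.integrable_bound[OF one gN])
    show "AE y in N. norm (g y) \<le> norm (1 + (norm (g y))\<^sup>2)"
    proof (rule AE_I2)
      fix y
      have "norm (g y) \<le> 1 + (norm (g y))\<^sup>2" by (rule sq)
      also have "\<dots> = norm (1 + (norm (g y))\<^sup>2)" by simp
      finally show "norm (g y) \<le> norm (1 + (norm (g y))\<^sup>2)" .
    qed
  qed
  show ?thesis
  proof (rule cip_cover[where I=Basis and X="\<lambda>b n \<omega>. (\<Sum>i<n. g (Y i \<omega>) \<bullet> b) / real n"
          and c="\<lambda>b. integral\<^sup>L N (\<lambda>y. g y \<bullet> b)"])
    show "prob_space M" by fact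
    show "finite (Basis :: 'v set)" by simp
  next
    fix b :: 'v assume b: "b \<in> Basis"
    show "cip M (\<lambda>n \<omega>. (\<Sum>i<n. g (Y i \<omega>) \<bullet> b) / real n) (integral\<^sup>L N (\<lambda>y. g y \<bullet> b))"
    proof (rule wlln_real[OF P Ym ind dist])
      show "(\<lambda>y. g y \<bullet> b) \<in> borel_measurable borel" by measurable
      show "integrable N (\<lambda>y. (g y \<bullet> b)\<^sup>2)"
        apply (rule Bochner_Integration.integrable_bound[OF g2])
         apply (rule mN) apply measurable
        apply (rule AE_I2)
        subgoal for y
        proof -
          have "\<bar>g y \<bullet> b\<bar> \<le> norm (g y)" by (rule Basis_le_norm[OF b])
          then have "\<bar>g y \<bullet> b\<bar>\<^sup>2 \<le> (norm (g y))\<^sup>2" by (rule power_mono) simp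
          then show ?thesis by simp
        qed
        done
    qed
  next
    fix \<epsilon> :: real assume e: "\<epsilon> > 0"
    show "\<exists>\<epsilon>'>0. \<forall>n. \<forall>\<omega>\<in>space M. dist ((\<Sum>i<n. g (Y i \<omega>)) /\<^sub>R real n) (integral\<^sup>L N g) > \<epsilon> \<longrightarrow>
        (\<exists>b\<in>Basis. dist ((\<Sum>i<n. g (Y i \<omega>) \<bullet> b) / real n) (integral\<^sup>L N (\<lambda>y. g y \<bullet> b)) > \<epsilon>')"
    proof (intro exI[of _ "\<epsilon> / real DIM('v)"] conjI allI ballI impI)
      show "\<epsilon> / real DIM('v) > 0" using e by simp
      fix n \<omega> assume H: "dist ((\<Sum>i<n. g (Y i \<omega>)) /\<^sub>R real n) (integral\<^sup>L N g) > \<epsilon>"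
      let ?x = "(\<Sum>i<n. g (Y i \<omega>)) /\<^sub>R real n - integral\<^sup>L N g"
      have comp: "?x \<bullet> b = (\<Sum>i<n. g (Y i \<omega>) \<bullet> b) / real n - integral\<^sup>L N (\<lambda>y. g y \<bullet> b)" for b
        using gi by (simp add: inner_diff_left inner_sum_left divide_inverse mult.commute)
      show "\<exists>b\<in>Basis. dist ((\<Sum>i<n. g (Y i \<omega>) \<bullet> b) / real n) (integral\<^sup>L N (\<lambda>y. g y \<bullet> b)) > \<epsilon> / real DIM('v)"
      proof (rule ccontr)
        assume "\<not> ?thesis"
        then have le: "\<And>b. b \<in> Basis \<Longrightarrow> \<bar>?x \<bullet> b\<bar> \<le> \<epsilon> / real DIM('v)"
          using comp by (auto simp: dist_real_def not_less)
        have "norm ?x \<le> (\<Sum>b\<in>Basis. \<bar>?x \<bullet> b\<bar>)" by (rule norm_le_l1)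
        also have "\<dots> \<le> (\<Sum>b\<in>(Basis::'v set). \<epsilon> / real DIM('v))" by (rule sum_mono) (rule le)
        also have "\<dots> = \<epsilon>" by simp
        finally show False using H by (simp add: dist_norm)
      qed
    qed
  qed
qed

lemma cip_equicont:
  fixes S :: "nat \<Rightarrow> 'a \<Rightarrow> 'p::metric_space \<Rightarrow> 'v::metric_space" and P :: "nat \<Rightarrow> 'a \<Rightarrow> 'p"
  assumes PM: "prob_space M" and cP: "cip M P p" and cS: "cip M (\<lambda>n \<omega>. S n \<omega> p) \<mu>"
    and lip: "\<And>n \<omega> q. \<omega> \<in> space M \<Longrightarrow> dist q p \<le> 1 \<Longrightarrow> dist (S n \<omega> q) (S n \<omega> p) \<le> Lb n \<omega> * dist q p"
    and Lbm[measurable]: "\<And>n. Lb n \<in> borel_measurable M" and Lbi: "\<And>n. integrable M (Lb n)"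
    and Lb0: "\<And>n \<omega>. \<omega> \<in> space M \<Longrightarrow> 0 \<le> Lb n \<omega>" and Lbb: "\<And>n. integral\<^sup>L M (Lb n) \<le> B"
  shows "cip M (\<lambda>n \<omega>. S n \<omega> (P n \<omega>)) \<mu>"
  unfolding cip_def
proof (intro allI impI)
  interpret prob_space M by fact
  fix \<epsilon> \<delta> :: real assume e: "\<epsilon> > 0" and d: "\<delta> > 0"
  define C where "C = \<bar>B\<bar> + 1"
  have C: "C > 0" "B \<le> C" unfolding C_def by auto
  define K where "K = 3 * C / \<delta>"
  have K: "K > 0" using d C by (simp add: K_def)
  define \<eta> where "\<eta> = min 1 (\<epsilon> / (2 * K))"
  have eta: "\<eta> > 0" "\<eta> \<le> 1" "K * \<eta> \<le> \<epsilon> / 2" using K e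
    by (auto simp: \<eta>_def min_def field_simps)
  have d3: "\<delta>/3 > 0" and e2: "\<epsilon>/2 > 0" using d e by auto
  have ev1: "eventually (\<lambda>n. \<exists>A\<in>sets M. {\<omega>\<in>space M. dist (P n \<omega>) p > \<eta>} \<subseteq> A \<and> measure M A \<le> \<delta>/3) sequentially"
    using cP eta(1) d3 unfolding cip_def by blast
  have ev2: "eventually (\<lambda>n. \<exists>A\<in>sets M. {\<omega>\<in>space M. dist (S n \<omega> p) \<mu> > \<epsilon>/2} \<subseteq> A \<and> measure M A \<le> \<delta>/3) sequentially"
    using cS e2 d3 unfolding cip_def by blast
  show "eventually (\<lambda>n. \<exists>A\<in>sets M. {\<omega>\<in>space M. dist (S n \<omega> (P n \<omega>)) \<mu> > \<epsilon>} \<subseteq> A \<and> measure M A \<le> \<delta>) sequentially"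
    using ev1 ev2
  proof eventually_elim
    case (elim n)
    then obtain A1 A2 where A1: "A1 \<in> sets M" "{\<omega>\<in>space M. dist (P n \<omega>) p > \<eta>} \<subseteq> A1" "measure M A1 \<le> \<delta>/3"
      and A2: "A2 \<in> sets M" "{\<omega>\<in>space M. dist (S n \<omega> p) \<mu> > \<epsilon>/2} \<subseteq> A2" "measure M A2 \<le> \<delta>/3"
      by blast
    define A3 where "A3 = {\<omega>\<in>space M. Lb n \<omega> \<ge> K}"
    have A3s: "A3 \<in> sets M" unfolding A3_def by measurable
    have "measure M A3 \<le> integral\<^sup>L M (Lb n) / K"
      unfolding A3_def using Lbi Lb0 K by (intro integral_Markov_inequality_measure[where A="space M"]) (auto intro!: AE_I2)
    also have "\<dots> \<le> B / K" using Lbb K by (simp add: divide_right_mono)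
    also have "\<dots> \<le> \<delta>/3"
    proof -
      have "B / K = B * \<delta> / (3 * C)" using d by (simp add: K_def)
      also have "\<dots> \<le> C * \<delta> / (3 * C)"
        using d C by (intro divide_right_mono mult_right_mono) auto
      also have "\<dots> = \<delta> / 3" using C by simp
      finally show ?thesis .
    qed
    finally have A3m: "measure M A3 \<le> \<delta>/3" .
    show ?case
    proof (intro bexI[of _ "A1 \<union> A2 \<union> A3"] conjI)
      show "A1 \<union> A2 \<union> A3 \<in> sets M" using A1 A2 A3s by auto
      show "{\<omega>\<in>space M. dist (S n \<omega> (P n \<omega>)) \<mu> > \<epsilon>} \<subseteq> A1 \<union> A2 \<union> A3"
      proof
        fix \<omega> assume w: "\<omega> \<in> {\<omega>\<in>space M. dist (S n \<omega> (P n \<omega>)) \<mu> > \<epsilon>}"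
        show "\<omega> \<in> A1 \<union> A2 \<union> A3"
        proof (rule ccontr)
          assume "\<omega> \<notin> A1 \<union> A2 \<union> A3"
          then have h1: "dist (P n \<omega>) p \<le> \<eta>" and h2: "dist (S n \<omega> p) \<mu> \<le> \<epsilon>/2" and h3: "Lb n \<omega> < K"
            using w A1(2) A2(2) unfolding A3_def by auto
          have "dist (S n \<omega> (P n \<omega>)) \<mu> \<le> dist (S n \<omega> (P n \<omega>)) (S n \<omega> p) + dist (S n \<omega> p) \<mu>"
            by (rule dist_triangle)
          also have "\<dots> \<le> Lb n \<omega> * dist (P n \<omega>) p + \<epsilon>/2"
            using lip[of \<omega> "P n \<omega>" n] w h1 h2 eta by auto
          also have "Lb n \<omega> * dist (P n \<omega>) p \<le> K * \<eta>"
            using h1 h3 Lb0[of \<omega> n] w by (intro mult_mono) auto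
          finally show False using eta w by auto
        qed
      qed
      have "measure M (A1 \<union> A2 \<union> A3) \<le> measure M (A1 \<union> A2) + measure M A3"
        using A1 A2 A3s by (intro measure_Un_le) auto
      also have "measure M (A1 \<union> A2) \<le> measure M A1 + measure M A2"
        using A1 A2 by (intro measure_Un_le) auto
      finally show "measure M (A1 \<union> A2 \<union> A3) \<le> \<delta>" using A1 A2 A3m by linarith
    qed
  qed
qed




lemma phi_d_pos: "phi_d y > 0"
  unfolding phi_d_def by simp

lemma ratio_aux:
  fixes c A B :: real assumes "c > 0" "A > 0" "B > 0"
  shows "c * A / (c * A + c * B) = 1 / (1 + B / A)"
proof -
  have "c * A + c * B = c * (A + B)" by (simp add: algebra_simps)
  then have "c * A / (c * A + c * B) = A / (A + B)" using assms by simp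
  also have "\<dots> = 1 / (1 + B / A)" using assms by (simp add: field_simps)
  finally show ?thesis .
qed

lemma v_d_formula: "v_d y m1 m2 = 1 / (1 + exp ((norm (y - m1))\<^sup>2 / 2 - (norm (y - m2))\<^sup>2 / 2))"
proof -
  let ?c = "(2 * pi) powr (- real CARD('a) / 2)"
  have c: "?c > 0" by simp
  have "v_d y m1 m2 = ?c * exp (- (norm (y - m1))\<^sup>2 / 2) / (?c * exp (- (norm (y - m1))\<^sup>2 / 2) + ?c * exp (- (norm (y - m2))\<^sup>2 / 2))"
    unfolding v_d_def phi_d_def by simp
  also have "\<dots> = 1 / (1 + exp (- (norm (y - m2))\<^sup>2 / 2) / exp (- (norm (y - m1))\<^sup>2 / 2))"
    using c by (rule ratio_aux) auto
  also have "exp (- (norm (y - m2))\<^sup>2 / 2) / exp (- (norm (y - m1))\<^sup>2 / 2) = exp ((norm (y - m1))\<^sup>2 / 2 - (norm (y - m2))\<^sup>2 / 2)"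
    by (simp add: exp_diff[symmetric])
  finally show ?thesis .
qed

lemma v_d_bounds: "0 < v_d y m1 m2" "v_d y m1 m2 < 1"
  unfolding v_d_formula by (auto simp: field_simps add_pos_pos)

lemma v_d_meas[measurable]: "(\<lambda>y. v_d y m1 m2) \<in> borel_measurable borel"
  unfolding v_d_formula by measurable

lemma sig_lip_aux:
  fixes s t :: real assumes st: "s \<le> t"
  shows "1/(1+exp s) - 1/(1+exp t) \<le> t - s" "0 \<le> 1/(1+exp s) - 1/(1+exp t)"
proof -
  have ps: "1 + exp s > 0" and pt: "1 + exp t > 0" by (auto simp: add_pos_pos)
  have ab: "exp s \<le> exp t" using st by simp
  have key: "exp t - exp s \<le> exp t * (t - s)"
  proof -
    have "1 + (s - t) \<le> exp (s - t)" by (rule exp_ge_add_one_self)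
    then have "exp t * (1 + (s - t)) \<le> exp t * exp (s - t)" by (intro mult_left_mono) auto
    also have "exp t * exp (s - t) = exp s" by (simp add: exp_add[symmetric])
    finally show ?thesis by (simp add: algebra_simps)
  qed
  have eq: "1/(1+exp s) - 1/(1+exp t) = (exp t - exp s)/((1+exp s)*(1+exp t))"
    using ps pt by (simp add: field_simps)
  have "(exp t - exp s)/((1+exp s)*(1+exp t)) \<le> (exp t * (t - s))/((1+exp s)*(1+exp t))"
    using ps pt key by (intro divide_right_mono) auto
  also have "\<dots> \<le> t - s"
  proof -
    have "exp t \<le> (1+exp s)*(1+exp t)" by (simp add: algebra_simps add_nonneg_nonneg)
    then have "exp t * (t - s) \<le> ((1+exp s)*(1+exp t)) * (t - s)" using st by (intro mult_right_mono) auto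
    then show ?thesis using ps pt by (simp add: pos_divide_le_eq mult.commute)
  qed
  finally show "1/(1+exp s) - 1/(1+exp t) \<le> t - s" using eq by simp
  show "0 \<le> 1/(1+exp s) - 1/(1+exp t)" unfolding eq using ab ps pt by simp
qed

lemma sig_lip: fixes s t :: real shows "\<bar>1/(1+exp s) - 1/(1+exp t)\<bar> \<le> \<bar>s - t\<bar>"
proof (cases "s \<le> t")
  case True then show ?thesis using sig_lip_aux[OF True] by linarith
next
  case False then have "t \<le> s" by simp
  then show ?thesis using sig_lip_aux[OF \<open>t \<le> s\<close>] by linarith
qed

lemma sqdiff_bound:
  fixes y a b :: "'v::real_normed_vector"
  shows "\<bar>(norm (y - a))\<^sup>2 - (norm (y - b))\<^sup>2\<bar> \<le> norm (a - b) * (2 * norm y + norm a + norm b)"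
proof -
  have "\<bar>(norm (y - a))\<^sup>2 - (norm (y - b))\<^sup>2\<bar> = \<bar>norm (y - a) - norm (y - b)\<bar> * (norm (y - a) + norm (y - b))"
  proof -
    have "(norm (y - a))\<^sup>2 - (norm (y - b))\<^sup>2 = (norm (y - a) - norm (y - b)) * (norm (y - a) + norm (y - b))"
      by (simp add: power2_eq_square algebra_simps)
    then have "\<bar>(norm (y - a))\<^sup>2 - (norm (y - b))\<^sup>2\<bar> = \<bar>norm (y - a) - norm (y - b)\<bar> * \<bar>norm (y - a) + norm (y - b)\<bar>"
      by (simp only: abs_mult)
    then show ?thesis by simp
  qed
  also have "\<dots> \<le> norm (a - b) * (2 * norm y + norm a + norm b)"
  proof (rule mult_mono)
    have "\<bar>norm (y - a) - norm (y - b)\<bar> \<le> norm ((y - a) - (y - b))" by (rule norm_triangle_ineq3)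
    then show "\<bar>norm (y - a) - norm (y - b)\<bar> \<le> norm (a - b)" by (simp add: norm_minus_commute)
    have "norm (y - a) \<le> norm y + norm a" "norm (y - b) \<le> norm y + norm b" by (auto intro: norm_triangle_ineq4)
    then show "norm (y - a) + norm (y - b) \<le> 2 * norm y + norm a + norm b" by simp
  qed auto
  finally show ?thesis .
qed

lemma abs_half: fixes X Y :: real shows "\<bar>X / 2 - Y / 2\<bar> \<le> \<bar>X\<bar> / 2 + \<bar>Y\<bar> / 2"
  using abs_triangle_ineq4[of "X/2" "Y/2"] by simp

lemma v_d_lip:
  fixes y a1 a2 m1 m2 :: "real ^ 'n"
  assumes "dist (a1, a2) (m1, m2) \<le> 1"
  shows "\<bar>v_d y a1 a2 - v_d y m1 m2\<bar> \<le> (2 * norm y + norm m1 + norm m2 + 1) * dist (a1, a2) (m1, m2)"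
proof -
  let ?D = "dist (a1, a2) (m1, m2)"
  have "dist a1 m1 \<le> ?D" "dist a2 m2 \<le> ?D"
    by (simp_all add: dist_Pair_Pair real_sqrt_sum_squares_ge1 real_sqrt_sum_squares_ge2)
  then have d1: "norm (a1 - m1) \<le> ?D" and d2: "norm (a2 - m2) \<le> ?D"
    by (simp_all only: dist_norm)
  have n1: "norm a1 \<le> norm m1 + 1"
    using d1 assms norm_triangle_ineq2[of a1 m1] by linarith
  have n2: "norm a2 \<le> norm m2 + 1"
    using d2 assms norm_triangle_ineq2[of a2 m2] by linarith
  have D0: "0 \<le> ?D" by simp
  let ?s = "\<lambda>u w. (norm (y - u))\<^sup>2 / 2 - (norm (y - w))\<^sup>2 / 2"
  have "\<bar>v_d y a1 a2 - v_d y m1 m2\<bar> \<le> \<bar>?s a1 a2 - ?s m1 m2\<bar>"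
    unfolding v_d_formula by (rule sig_lip)
  also have "?s a1 a2 - ?s m1 m2 = ((norm (y - a1))\<^sup>2 - (norm (y - m1))\<^sup>2) / 2 - ((norm (y - a2))\<^sup>2 - (norm (y - m2))\<^sup>2) / 2"
    by (simp add: field_simps)
  also have "\<bar>\<dots>\<bar> \<le> \<bar>(norm (y - a1))\<^sup>2 - (norm (y - m1))\<^sup>2\<bar> / 2 + \<bar>(norm (y - a2))\<^sup>2 - (norm (y - m2))\<^sup>2\<bar> / 2"
    by (rule abs_half)
  also have "\<dots> \<le> norm (a1 - m1) * (2 * norm y + norm a1 + norm m1) / 2 + norm (a2 - m2) * (2 * norm y + norm a2 + norm m2) / 2"
    using sqdiff_bound[of y a1 m1] sqdiff_bound[of y a2 m2] by (intro add_mono divide_right_mono) auto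
  also have "\<dots> \<le> ?D * (2 * norm y + 2 * norm m1 + 1) / 2 + ?D * (2 * norm y + 2 * norm m2 + 1) / 2"
  proof -
    have "norm (a1 - m1) * (2 * norm y + norm a1 + norm m1) \<le> ?D * (2 * norm y + 2 * norm m1 + 1)"
      using d1 n1 D0 by (intro mult_mono) auto
    moreover have "norm (a2 - m2) * (2 * norm y + norm a2 + norm m2) \<le> ?D * (2 * norm y + 2 * norm m2 + 1)"
      using d2 n2 D0 by (intro mult_mono) auto
    ultimately show ?thesis by linarith
  qed
  also have "\<dots> = (2 * norm y + norm m1 + norm m2 + 1) * ?D" by (simp add: field_simps)
  finally show ?thesis .
qed




lemma integrable_affine:
  fixes g :: "'a::euclidean_space \<Rightarrow> real"
  assumes c: "c \<noteq> 0" and gm[measurable]: "g \<in> borel_measurable borel" and gi: "integrable lborel g"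
  shows "integrable lborel (\<lambda>x. g (t + c *\<^sub>R x))"
proof -
  define K :: real where "K = \<bar>c\<bar> ^ DIM('a)"
  have K: "K > 0" using c by (simp add: K_def)
  have "integrable (density (distr lborel borel (\<lambda>x. t + c *\<^sub>R x)) (\<lambda>_. \<bar>c\<bar> ^ DIM('a))) g"
    using gi by (subst (asm) lborel_affine[OF c, of t])
  then have "integrable (distr lborel borel (\<lambda>x. t + c *\<^sub>R x)) (\<lambda>x. K *\<^sub>R g x)"
    unfolding K_def by (subst (asm) integrable_density) (auto simp: K_def)
  then have "integrable lborel (\<lambda>x. K *\<^sub>R g (t + c *\<^sub>R x))"
    by (subst (asm) integrable_distr_eq) auto
  then have "integrable lborel (\<lambda>x. (1/K) * (K * g (t + c *\<^sub>R x)))"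
    by (intro integrable_mult_right) simp
  then show ?thesis using K by simp
qed

definition gE :: "'a::real_normed_vector \<Rightarrow> real" where "gE x = exp (- (norm x)\<^sup>2 / 2)"

lemma gE_meas[measurable]: "gE \<in> borel_measurable borel" unfolding gE_def by measurable

lemma phi_gE: "phi_d x = (2 * pi) powr (- real CARD('n) / 2) * gE (x :: real ^ 'n)"
  unfolding phi_d_def gE_def by simp

lemma gauss_moment:
  fixes mu1s mu2s :: "real ^ 'n"
  assumes P: "prob_space (model2_law mu1s mu2s)"
  shows "integrable (model2_law mu1s mu2s) (\<lambda>y. (norm y)\<^sup>2)"
proof -
  define K :: real where "K = (2 * pi) powr (- real CARD('n) / 2)"
  have K: "K > 0" by (simp add: K_def)
  define f where "f y = 1/2 * phi_d (y - mu1s) + 1/2 * phi_d (y - mu2s)" for y :: "real ^ 'n"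
  have phim[measurable]: "phi_d \<in> borel_measurable (borel :: (real ^ 'n) measure)" unfolding phi_d_def by measurable
  have fm[measurable]: "f \<in> borel_measurable borel" unfolding f_def by measurable
  have f0: "0 \<le> f y" for y unfolding f_def using phi_d_pos[of "y - mu1s"] phi_d_pos[of "y - mu2s"] by linarith
  have lawd: "model2_law mu1s mu2s = density lborel (\<lambda>y. ennreal (f y))" unfolding model2_law_def f_def by simp
  have "integrable (model2_law mu1s mu2s) (\<lambda>_. 1::real)"
    using P by (simp add: prob_space.finite_measure finite_measure.integrable_const)
  then have "integrable lborel (\<lambda>y. f y *\<^sub>R (1::real))"
    unfolding lawd using f0 by (subst (asm) integrable_density) auto
  then have fi: "integrable lborel f" by simp
  have p1: "integrable lborel (\<lambda>y. phi_d (y - mu1s))"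
  proof (rule Bochner_Integration.integrable_bound[of _ "\<lambda>y. 2 * f y"])
    show "integrable lborel (\<lambda>y. 2 * f y)" using fi by simp
    show "(\<lambda>y. phi_d (y - mu1s)) \<in> borel_measurable lborel" by measurable
    show "AE y in lborel. norm (phi_d (y - mu1s)) \<le> norm (2 * f y)"
    proof (rule AE_I2)
      fix y :: "real ^ 'n"
      have a: "0 < phi_d (y - mu1s)" "0 < phi_d (y - mu2s)" by (rule phi_d_pos)+
      then have "norm (phi_d (y - mu1s)) = phi_d (y - mu1s)" "norm (2 * f y) = phi_d (y - mu1s) + phi_d (y - mu2s)"
        by (simp_all add: f_def)
      then show "norm (phi_d (y - mu1s)) \<le> norm (2 * f y)" using a by linarith
    qed
  qed
  have "integrable lborel (\<lambda>x. phi_d (mu1s + (1::real) *\<^sub>R x - mu1s))"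
    using p1 by (intro integrable_affine[where g="\<lambda>y. phi_d (y - mu1s)"]) auto
  then have "integrable lborel (phi_d :: real ^ 'n \<Rightarrow> real)" by simp
  then have "integrable lborel (\<lambda>x::real^'n. (1/K) * phi_d x)" by (intro integrable_mult_right)
  then have Ei: "integrable lborel (gE :: real ^ 'n \<Rightarrow> real)" using K by (simp add: phi_gE K_def)
  have "integrable lborel (\<lambda>x::real^'n. gE (0 + (1 / sqrt 2) *\<^sub>R x))"
    using Ei by (intro integrable_affine) auto
  then have E4i: "integrable lborel (\<lambda>x::real^'n. exp (- (norm x)\<^sup>2 / 4))"
    by (simp add: gE_def power_mult_distrib power_divide)
  have n2Ei: "integrable lborel (\<lambda>x::real^'n. (norm x)\<^sup>2 * gE x)"
  proof (rule Bochner_Integration.integrable_bound[of _ "\<lambda>x. 4 * exp (- (norm x)\<^sup>2 / 4)"])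
    show "integrable lborel (\<lambda>x::real^'n. 4 * exp (- (norm x)\<^sup>2 / 4))" using E4i by simp
    show "(\<lambda>x::real^'n. (norm x)\<^sup>2 * gE x) \<in> borel_measurable lborel" by measurable
    show "AE x in lborel. norm ((norm x)\<^sup>2 * gE x) \<le> norm (4 * exp (- (norm (x::real^'n))\<^sup>2 / 4))"
    proof (rule AE_I2)
      fix x :: "real ^ 'n"
      define u where "u = (norm x)\<^sup>2 / 4"
      have u: "u \<le> exp u" using exp_ge_add_one_self[of u] by linarith
      have "(norm x)\<^sup>2 * gE x = 4 * u * exp (- (2 * u))" unfolding u_def gE_def by simp
      also have "\<dots> \<le> 4 * exp u * exp (- (2 * u))" using u by (intro mult_right_mono) auto
      also have "\<dots> = 4 * exp (- u)" by (simp add: mult.assoc exp_add[symmetric])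
      finally show "norm ((norm x)\<^sup>2 * gE x) \<le> norm (4 * exp (- (norm x)\<^sup>2 / 4))"
        unfolding u_def by (simp add: gE_def)
    qed
  qed
  have shiftE: "integrable lborel (\<lambda>x::real^'n. gE (x - m))" for m
    using integrable_affine[OF _ gE_meas Ei, of 1 "-m"] by simp
  have shiftn2E: "integrable lborel (\<lambda>x::real^'n. (norm (x - m))\<^sup>2 * gE (x - m))" for m
    using integrable_affine[OF _ _ n2Ei, of 1 "-m"] by simp
  define H where "H y = K * ((norm (y - mu1s))\<^sup>2 * gE (y - mu1s) + (norm mu1s)\<^sup>2 * gE (y - mu1s)
      + (norm (y - mu2s))\<^sup>2 * gE (y - mu2s) + (norm mu2s)\<^sup>2 * gE (y - mu2s))" for y :: "real ^ 'n"
  have Hi: "integrable lborel H" unfolding H_def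
    using shiftE shiftn2E by (intro integrable_mult_right Bochner_Integration.integrable_add) auto
  have bnd: "(norm y)\<^sup>2 \<le> 2 * (norm (y - m))\<^sup>2 + 2 * (norm m)\<^sup>2" for y m :: "real ^ 'n"
  proof -
    have "norm y \<le> norm (y - m) + norm m" using norm_triangle_ineq[of "y - m" m] by simp
    then have "(norm y)\<^sup>2 \<le> (norm (y - m) + norm m)\<^sup>2" by (intro power_mono) auto
    also have "\<dots> \<le> 2 * (norm (y - m))\<^sup>2 + 2 * (norm m)\<^sup>2"
      using zero_le_power2[of "norm (y - m) - norm m"] by (simp add: power2_diff power2_sum)
    finally show ?thesis .
  qed
  have "integrable lborel (\<lambda>y. f y * (norm y)\<^sup>2)"
  proof (rule Bochner_Integration.integrable_bound[OF Hi])
    show "(\<lambda>y. f y * (norm y)\<^sup>2) \<in> borel_measurable lborel" by measurable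
    show "AE y in lborel. norm (f y * (norm y)\<^sup>2) \<le> norm (H y)"
    proof (rule AE_I2)
      fix y :: "real ^ 'n"
      have g1: "gE (y - mu1s) > 0" "gE (y - mu2s) > 0" by (auto simp: gE_def)
      have "f y * (norm y)\<^sup>2 = K/2 * (gE (y - mu1s) * (norm y)\<^sup>2) + K/2 * (gE (y - mu2s) * (norm y)\<^sup>2)"
        unfolding f_def phi_gE K_def by (simp add: algebra_simps)
      also have "\<dots> \<le> K/2 * (gE (y - mu1s) * (2 * (norm (y - mu1s))\<^sup>2 + 2 * (norm mu1s)\<^sup>2))
                  + K/2 * (gE (y - mu2s) * (2 * (norm (y - mu2s))\<^sup>2 + 2 * (norm mu2s)\<^sup>2))"
        using K g1 bnd[of y mu1s] bnd[of y mu2s]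
        by (intro add_mono mult_left_mono) auto
      also have "\<dots> = H y" unfolding H_def by (simp add: algebra_simps)
      finally have le: "f y * (norm y)\<^sup>2 \<le> H y" .
      have z: "0 \<le> f y * (norm y)\<^sup>2" using f0[of y] by simp
      then have h0: "0 \<le> H y" using le by linarith
      show "norm (f y * (norm y)\<^sup>2) \<le> norm (H y)"
        using le by (simp only: real_norm_def abs_of_nonneg[OF z] abs_of_nonneg[OF h0])
    qed
  qed
  then have "integrable lborel (\<lambda>y. f y *\<^sub>R (norm y)\<^sup>2)" by simp
  then show ?thesis unfolding lawd by (subst integrable_density) (auto intro: f0)
qed




lemma le_one_plus_sq: "x \<le> 1 + x\<^sup>2" for x :: real
proof -
  have "0 \<le> (x - 1)\<^sup>2" by simp
  then have "0 \<le> x\<^sup>2 + 1 - 2 * x" by (simp add: power2_diff)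
  moreover have "0 \<le> x\<^sup>2" by simp
  ultimately show ?thesis by linarith
qed

lemma stat_conv:
  fixes Y :: "nat \<Rightarrow> 'a \<Rightarrow> real ^ 'n" and c :: "real ^ 'n \<Rightarrow> 'p::metric_space \<Rightarrow> real"
    and h :: "real ^ 'n \<Rightarrow> 'v::euclidean_space"
  assumes P: "prob_space M" and Ym[measurable]: "\<And>i. Y i \<in> borel_measurable M"
    and ind: "prob_space.indep_vars M (\<lambda>_. borel) Y UNIV"
    and dist: "\<And>i. distr M borel (Y i) = N"
    and N2: "integrable N (\<lambda>y. (norm y)\<^sup>2)"
    and cP: "cip M Pn p"
    and cm[measurable]: "\<And>q. (\<lambda>y. c y q) \<in> borel_measurable borel"
    and cb: "\<And>y q. \<bar>c y q\<bar> \<le> 1"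
    and clip: "\<And>y q. dist q p \<le> 1 \<Longrightarrow> \<bar>c y q - c y p\<bar> \<le> (2 * norm y + Cp) * dist q p"
    and Cp: "0 \<le> Cp"
    and hm[measurable]: "h \<in> borel_measurable borel"
    and hb: "\<And>y. norm (h y) \<le> 1 + norm y"
  shows "cip M (\<lambda>n \<omega>. (\<Sum>i<n. c (Y i \<omega>) (Pn n \<omega>) *\<^sub>R h (Y i \<omega>)) /\<^sub>R real n)
            (integral\<^sup>L N (\<lambda>y. c y p *\<^sub>R h y))"
proof -
  interpret prob_space M by fact
  have PN: "prob_space N" using prob_space_distr[OF Ym[of 0]] dist[of 0] by simp
  have sN: "sets N = sets borel" using dist[of 0] by (metis sets_distr)
  have mN: "\<And>f::real^'n \<Rightarrow> real. f \<in> borel_measurable borel \<Longrightarrow> f \<in> borel_measurable N"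
    by (subst measurable_cong_sets[OF sN refl]) simp
  have one: "integrable N (\<lambda>y. 1 + (norm y)\<^sup>2)"
    using N2 prob_space.finite_measure[OF PN]
    by (intro Bochner_Integration.integrable_add) (auto simp: finite_measure.integrable_const)
  have N1: "integrable N (\<lambda>y. norm y)"
  proof (rule Bochner_Integration.integrable_bound[OF one])
    show "(\<lambda>y. norm y) \<in> borel_measurable N" by (rule mN) measurable
    show "AE y in N. norm (norm y) \<le> norm (1 + (norm y)\<^sup>2)"
    proof (rule AE_I2)
      fix y :: "real ^ 'n"
      have "norm y \<le> 1 + (norm y)\<^sup>2" by (rule le_one_plus_sq)
      then show "norm (norm y) \<le> norm (1 + (norm y)\<^sup>2)" by simp
    qed
  qed
  define L where "L y = (2 * norm y + Cp) * (1 + norm y)" for y :: "real ^ 'n"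
  have Lm[measurable]: "L \<in> borel_measurable borel" unfolding L_def by measurable
  have L0: "0 \<le> L y" for y unfolding L_def using Cp by simp
  have Leq: "L = (\<lambda>y. 2 * (norm y)\<^sup>2 + (2 + Cp) * norm y + Cp)"
    unfolding L_def by (auto simp: fun_eq_iff algebra_simps power2_eq_square)
  have LN: "integrable N L" unfolding Leq
    using N1 N2 prob_space.finite_measure[OF PN]
    by (intro Bochner_Integration.integrable_add integrable_mult_right) (auto simp: finite_measure.integrable_const)
  have LYi: "integrable M (\<lambda>\<omega>. L (Y i \<omega>))" for i
    using LN dist[of i] integrable_distr_eq[of "Y i" M borel L] by simp
  have ELYi: "integral\<^sup>L M (\<lambda>\<omega>. L (Y i \<omega>)) = integral\<^sup>L N L" for i
    using integral_distr[of "Y i" M borel L] dist[of i] by simp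
  have EL0: "0 \<le> integral\<^sup>L N L" using L0 by (simp add: integral_nonneg_AE)
  define S where "S n \<omega> q = (\<Sum>i<n. c (Y i \<omega>) q *\<^sub>R h (Y i \<omega>)) /\<^sub>R real n" for n \<omega> q
  define Lb where "Lb n \<omega> = (\<Sum>i<n. L (Y i \<omega>)) / real n" for n \<omega>
  have "cip M (\<lambda>n \<omega>. S n \<omega> (Pn n \<omega>)) (integral\<^sup>L N (\<lambda>y. c y p *\<^sub>R h y))"
  proof (rule cip_equicont[OF P cP, where Lb=Lb and B="integral\<^sup>L N L"])
    show "cip M (\<lambda>n \<omega>. S n \<omega> p) (integral\<^sup>L N (\<lambda>y. c y p *\<^sub>R h y))"
      unfolding S_def
    proof (rule wlln_vec[OF P Ym ind dist])
      show "(\<lambda>y. c y p *\<^sub>R h y) \<in> borel_measurable borel" by measurable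
      show "integrable N (\<lambda>y. (norm (c y p *\<^sub>R h y))\<^sup>2)"
      proof (rule Bochner_Integration.integrable_bound[of _ "\<lambda>y. 2 * (1 + (norm y)\<^sup>2)"])
        show "integrable N (\<lambda>y. 2 * (1 + (norm y)\<^sup>2))" by (rule integrable_mult_right[OF one])
        show "(\<lambda>y. (norm (c y p *\<^sub>R h y))\<^sup>2) \<in> borel_measurable N" by (rule mN) measurable
        show "AE y in N. norm ((norm (c y p *\<^sub>R h y))\<^sup>2) \<le> norm (2 * (1 + (norm y)\<^sup>2))"
        proof (rule AE_I2)
          fix y :: "real ^ 'n"
          have "norm (c y p *\<^sub>R h y) \<le> 1 * (1 + norm y)"
            using cb[of y p] hb[of y] by (simp only: norm_scaleR) (intro mult_mono, auto)
          then have "(norm (c y p *\<^sub>R h y))\<^sup>2 \<le> (1 + norm y)\<^sup>2" by (intro power_mono) auto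
          also have "\<dots> \<le> 2 * (1 + (norm y)\<^sup>2)"
            using zero_le_power2[of "1 - norm y"] by (simp add: power2_diff power2_sum)
          finally show "norm ((norm (c y p *\<^sub>R h y))\<^sup>2) \<le> norm (2 * (1 + (norm y)\<^sup>2))" by simp
        qed
      qed
    qed
  next
    fix n \<omega> q assume w: "\<omega> \<in> space M" and dq: "dist q p \<le> 1"
    have tm: "norm ((c (Y i \<omega>) q - c (Y i \<omega>) p) *\<^sub>R h (Y i \<omega>)) \<le> L (Y i \<omega>) * dist q p" for i
    proof -
      have "norm ((c (Y i \<omega>) q - c (Y i \<omega>) p) *\<^sub>R h (Y i \<omega>)) = \<bar>c (Y i \<omega>) q - c (Y i \<omega>) p\<bar> * norm (h (Y i \<omega>))"
        by simp
      also have "\<dots> \<le> ((2 * norm (Y i \<omega>) + Cp) * dist q p) * (1 + norm (Y i \<omega>))"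
        using clip[OF dq, of "Y i \<omega>"] hb[of "Y i \<omega>"] Cp by (intro mult_mono) auto
      also have "\<dots> = L (Y i \<omega>) * dist q p" unfolding L_def by (simp add: algebra_simps)
      finally show ?thesis .
    qed
    have "S n \<omega> q - S n \<omega> p = (\<Sum>i<n. (c (Y i \<omega>) q - c (Y i \<omega>) p) *\<^sub>R h (Y i \<omega>)) /\<^sub>R real n"
      unfolding S_def by (simp add: scaleR_diff_left sum_subtractf scaleR_diff_right)
    then have "dist (S n \<omega> q) (S n \<omega> p) = norm (\<Sum>i<n. (c (Y i \<omega>) q - c (Y i \<omega>) p) *\<^sub>R h (Y i \<omega>)) / real n"
      by (simp add: dist_norm divide_inverse mult.commute)
    also have "\<dots> \<le> (\<Sum>i<n. L (Y i \<omega>) * dist q p) / real n"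
    proof (rule divide_right_mono)
      show "norm (\<Sum>i<n. (c (Y i \<omega>) q - c (Y i \<omega>) p) *\<^sub>R h (Y i \<omega>)) \<le> (\<Sum>i<n. L (Y i \<omega>) * dist q p)"
        by (rule order_trans[OF norm_sum]) (rule sum_mono[OF tm])
    qed simp
    also have "\<dots> = Lb n \<omega> * dist q p" unfolding Lb_def by (simp add: sum_distrib_right)
    finally show "dist (S n \<omega> q) (S n \<omega> p) \<le> Lb n \<omega> * dist q p" .
  next
    fix n show "Lb n \<in> borel_measurable M" unfolding Lb_def by measurable
  next
    fix n show "integrable M (Lb n)" unfolding Lb_def using LYi by auto
  next
    fix n \<omega> show "0 \<le> Lb n \<omega>" unfolding Lb_def using L0 by (simp add: sum_nonneg)
  next
    fix n
    have "integral\<^sup>L M (Lb n) = (\<Sum>i<n. integral\<^sup>L M (\<lambda>\<omega>. L (Y i \<omega>))) / real n"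
      unfolding Lb_def using LYi by (simp add: integral_sum)
    also have "\<dots> = real n * integral\<^sup>L N L / real n" using ELYi by simp
    also have "\<dots> \<le> integral\<^sup>L N L" using EL0 by (cases "n = 0") auto
    finally show "integral\<^sup>L M (Lb n) \<le> integral\<^sup>L N L" .
  qed
  then show ?thesis unfolding S_def .
qed




lemma ratio_avg:
  fixes b :: "'v::real_vector" and a :: real
  assumes "n = 0 \<Longrightarrow> b = 0"
  shows "inverse (a /\<^sub>R real n) *\<^sub>R (b /\<^sub>R real n) = inverse a *\<^sub>R b"
proof (cases "n = 0")
  case True then show ?thesis using assms by simp
next
  case False
  then have "inverse (a /\<^sub>R real n) *\<^sub>R (b /\<^sub>R real n) = (inverse (a /\<^sub>R real n) * inverse (real n)) *\<^sub>R b"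
    by simp
  also have "inverse (a /\<^sub>R real n) * inverse (real n) = inverse a" using False
    by (simp add: field_simps)
  finally show ?thesis .
qed

lemma samp_step_eq:
  "samp_em_step n ys q =
    (inverse ((\<Sum>i<n. v_d (ys i) (fst q) (snd q) *\<^sub>R (1::real)) /\<^sub>R real n) *\<^sub>R
       ((\<Sum>i<n. v_d (ys i) (fst q) (snd q) *\<^sub>R ys i) /\<^sub>R real n),
     inverse ((\<Sum>i<n. (1 - v_d (ys i) (fst q) (snd q)) *\<^sub>R (1::real)) /\<^sub>R real n) *\<^sub>R
       ((\<Sum>i<n. (1 - v_d (ys i) (fst q) (snd q)) *\<^sub>R ys i) /\<^sub>R real n))"
proof -
  obtain m1 m2 where q: "q = (m1, m2)" by (cases q)
  show ?thesis unfolding q samp_em_step_def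
    by (subst ratio_avg, simp)+ simp
qed

theorem theorem6:
  fixes M :: "'a measure"
    and Y :: "nat \<Rightarrow> 'a \<Rightarrow> real ^ 'n"
    and mu1s mu2s mu1_0 mu2_0 :: "real ^ 'n"
  assumes "prob_space M"
    and "\<And>i. Y i \<in> borel_measurable M"
    and "prob_space.indep_vars M (\<lambda>_. borel) Y UNIV"
    and "\<And>i. distr M borel (Y i) = model2_law mu1s mu2s"
  shows "\<forall>t. \<forall>\<epsilon>>0.
      ((\<lambda>n. measure M {\<omega> \<in> space M.
          dist (fst (samp_em n (\<lambda>i. Y i \<omega>) (mu1_0, mu2_0) t))
               (fst (pop_em mu1s mu2s (mu1_0, mu2_0) t)) > \<epsilon>}) \<longlonglongrightarrow> 0)
    \<and> ((\<lambda>n. measure M {\<omega> \<in> space M.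
          dist (snd (samp_em n (\<lambda>i. Y i \<omega>) (mu1_0, mu2_0) t))
               (snd (pop_em mu1s mu2s (mu1_0, mu2_0) t)) > \<epsilon>}) \<longlonglongrightarrow> 0)"
proof -
  note P = assms(1) and Ym = assms(2) and ind = assms(3) and dist = assms(4)
  define N where "N = model2_law mu1s mu2s"
  have distN: "\<And>i. distr M borel (Y i) = N" using dist unfolding N_def .
  have PN: "prob_space N" using prob_space.prob_space_distr[OF P Ym[of 0]] distN[of 0] by simp
  have N2: "integrable N (\<lambda>y. (norm y)\<^sup>2)" unfolding N_def by (rule gauss_moment) (use PN N_def in simp)
  have sN: "sets N = sets borel" using distN[of 0] by (metis sets_distr)
  have mN: "\<And>f::real^'n \<Rightarrow> real. f \<in> borel_measurable borel \<Longrightarrow> f \<in> borel_measurable N"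
    by (subst measurable_cong_sets[OF sN refl]) simp
  define c1 where "c1 y q = v_d y (fst q) (snd q)" for y :: "real ^ 'n" and q :: "(real ^ 'n) \<times> (real ^ 'n)"
  define c2 where "c2 y q = 1 - v_d y (fst q) (snd q)" for y :: "real ^ 'n" and q :: "(real ^ 'n) \<times> (real ^ 'n)"
  have c1m[measurable]: "(\<lambda>y. c1 y q) \<in> borel_measurable borel" for q unfolding c1_def by measurable
  have c2m[measurable]: "(\<lambda>y. c2 y q) \<in> borel_measurable borel" for q unfolding c2_def by measurable
  have c1b: "\<bar>c1 y q\<bar> \<le> 1" for y q unfolding c1_def using v_d_bounds[of y "fst q" "snd q"] by simp
  have c2b: "\<bar>c2 y q\<bar> \<le> 1" for y q unfolding c2_def using v_d_bounds[of y "fst q" "snd q"] by simp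
  have c1lip: "\<bar>c1 y q - c1 y p\<bar> \<le> (2 * norm y + (norm (fst p) + norm (snd p) + 1)) * dist q p"
    if "dist q p \<le> 1" for y q p
  proof -
    have "dist (fst q, snd q) (fst p, snd p) \<le> 1" using that by simp
    from v_d_lip[OF this, of y] show ?thesis unfolding c1_def by (simp add: algebra_simps)
  qed
  have c2lip: "\<bar>c2 y q - c2 y p\<bar> \<le> (2 * norm y + (norm (fst p) + norm (snd p) + 1)) * dist q p"
    if "dist q p \<le> 1" for y q p
  proof -
    have "\<bar>c2 y q - c2 y p\<bar> = \<bar>c1 y q - c1 y p\<bar>" unfolding c1_def c2_def by simp
    then show ?thesis using c1lip[OF that] by simp
  qed
  have Cp: "0 \<le> norm (fst p) + norm (snd p) + 1" for p :: "(real ^ 'n) \<times> (real ^ 'n)" by simp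
  have h1b: "norm ((\<lambda>y::real^'n. 1::real) y) \<le> 1 + norm y" for y by simp
  have h2b: "norm ((\<lambda>y::real^'n. y) y) \<le> 1 + norm y" for y by simp
  have intb: "integrable N (\<lambda>y. c y p)" if "\<And>q. (\<lambda>y. c y q) \<in> borel_measurable borel" "\<And>y q. \<bar>c y q\<bar> \<le> 1"
    for c :: "real ^ 'n \<Rightarrow> (real ^ 'n) \<times> (real ^ 'n) \<Rightarrow> real" and p
    using that by (intro finite_measure.integrable_const_bound[OF prob_space.finite_measure[OF PN], where B=1] AE_I2 mN) auto
  have claim: "cip M (\<lambda>n \<omega>. samp_em n (\<lambda>i. Y i \<omega>) (mu1_0, mu2_0) t) (pop_em mu1s mu2s (mu1_0, mu2_0) t)" for t
  proof (induction t)
    case 0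
    show ?case unfolding samp_em_def pop_em_def by (simp add: cip_const)
  next
    case (Suc t)
    define Pn where "Pn n \<omega> = samp_em n (\<lambda>i. Y i \<omega>) (mu1_0, mu2_0) t" for n \<omega>
    define p where "p = pop_em mu1s mu2s (mu1_0, mu2_0) t"
    have IH: "cip M Pn p" using Suc unfolding Pn_def p_def .
    note sc = stat_conv[OF P Ym ind distN N2 IH]
    have A1: "cip M (\<lambda>n \<omega>. (\<Sum>i<n. c1 (Y i \<omega>) (Pn n \<omega>) *\<^sub>R (1::real)) /\<^sub>R real n) (integral\<^sup>L N (\<lambda>y. c1 y p *\<^sub>R (1::real)))"
      by (rule sc[where h="\<lambda>_. 1::real" and Cp="norm (fst p) + norm (snd p) + 1"]) (auto intro: c1b c1lip)
    have A2: "cip M (\<lambda>n \<omega>. (\<Sum>i<n. c1 (Y i \<omega>) (Pn n \<omega>) *\<^sub>R Y i \<omega>) /\<^sub>R real n) (integral\<^sup>L N (\<lambda>y. c1 y p *\<^sub>R y))"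
      by (rule sc[where h="\<lambda>y. y" and Cp="norm (fst p) + norm (snd p) + 1"]) (auto intro: c1b c1lip)
    have A3: "cip M (\<lambda>n \<omega>. (\<Sum>i<n. c2 (Y i \<omega>) (Pn n \<omega>) *\<^sub>R (1::real)) /\<^sub>R real n) (integral\<^sup>L N (\<lambda>y. c2 y p *\<^sub>R (1::real)))"
      by (rule sc[where h="\<lambda>_. 1::real" and Cp="norm (fst p) + norm (snd p) + 1"]) (auto intro: c2b c2lip)
    have A4: "cip M (\<lambda>n \<omega>. (\<Sum>i<n. c2 (Y i \<omega>) (Pn n \<omega>) *\<^sub>R Y i \<omega>) /\<^sub>R real n) (integral\<^sup>L N (\<lambda>y. c2 y p *\<^sub>R y))"
      by (rule sc[where h="\<lambda>y. y" and Cp="norm (fst p) + norm (snd p) + 1"]) (auto intro: c2b c2lip)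
    note F = cip_pair[OF P cip_pair[OF P A1 A2] cip_pair[OF P A3 A4]]
    define G where "G z = (inverse (fst (fst z)) *\<^sub>R snd (fst z), inverse (fst (snd z)) *\<^sub>R snd (snd z))"
      for z :: "(real \<times> (real ^ 'n)) \<times> (real \<times> (real ^ 'n))"
    have E1: "integral\<^sup>L N (\<lambda>y. c1 y p *\<^sub>R (1::real)) > 0"
    proof -
      have "integral\<^sup>L N (\<lambda>y. 0::real) < integral\<^sup>L N (\<lambda>y. c1 y p)"
        using intb[of c1 p, OF c1m c1b] PN
        by (intro finite_measure.integral_less_AE_space[OF prob_space.finite_measure[OF PN]])
           (auto intro!: AE_I2 simp: c1_def v_d_bounds prob_space.emeasure_space_1)
      then show ?thesis by simp
    qed
    have E3: "integral\<^sup>L N (\<lambda>y. c2 y p *\<^sub>R (1::real)) > 0"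
    proof -
      have "integral\<^sup>L N (\<lambda>y. 0::real) < integral\<^sup>L N (\<lambda>y. c2 y p)"
        using intb[of c2 p, OF c2m c2b] PN
        by (intro finite_measure.integral_less_AE_space[OF prob_space.finite_measure[OF PN]])
           (auto intro!: AE_I2 simp: c2_def v_d_bounds prob_space.emeasure_space_1)
      then show ?thesis by simp
    qed
    have cont: "isCont G ((integral\<^sup>L N (\<lambda>y. c1 y p *\<^sub>R (1::real)), integral\<^sup>L N (\<lambda>y. c1 y p *\<^sub>R y)),
                       (integral\<^sup>L N (\<lambda>y. c2 y p *\<^sub>R (1::real)), integral\<^sup>L N (\<lambda>y. c2 y p *\<^sub>R y)))"
      unfolding G_def using E1 E3 by (auto intro!: continuous_intros)
    note GF = cip_cont[OF P F cont]
    have eqS: "G (((\<Sum>i<n. c1 (Y i \<omega>) (Pn n \<omega>) *\<^sub>R (1::real)) /\<^sub>R real n, (\<Sum>i<n. c1 (Y i \<omega>) (Pn n \<omega>) *\<^sub>R Y i \<omega>) /\<^sub>R real n),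
                  ((\<Sum>i<n. c2 (Y i \<omega>) (Pn n \<omega>) *\<^sub>R (1::real)) /\<^sub>R real n, (\<Sum>i<n. c2 (Y i \<omega>) (Pn n \<omega>) *\<^sub>R Y i \<omega>) /\<^sub>R real n))
          = samp_em n (\<lambda>i. Y i \<omega>) (mu1_0, mu2_0) (Suc t)" for n \<omega>
    proof -
      have "samp_em n (\<lambda>i. Y i \<omega>) (mu1_0, mu2_0) (Suc t) = samp_em_step n (\<lambda>i. Y i \<omega>) (Pn n \<omega>)"
        unfolding samp_em_def Pn_def by simp
      also have "\<dots> = G (((\<Sum>i<n. c1 (Y i \<omega>) (Pn n \<omega>) *\<^sub>R (1::real)) /\<^sub>R real n, (\<Sum>i<n. c1 (Y i \<omega>) (Pn n \<omega>) *\<^sub>R Y i \<omega>) /\<^sub>R real n),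
                  ((\<Sum>i<n. c2 (Y i \<omega>) (Pn n \<omega>) *\<^sub>R (1::real)) /\<^sub>R real n, (\<Sum>i<n. c2 (Y i \<omega>) (Pn n \<omega>) *\<^sub>R Y i \<omega>) /\<^sub>R real n))"
        unfolding samp_step_eq G_def c1_def c2_def by simp
      finally show ?thesis by simp
    qed
    have eqE: "G ((integral\<^sup>L N (\<lambda>y. c1 y p *\<^sub>R (1::real)), integral\<^sup>L N (\<lambda>y. c1 y p *\<^sub>R y)),
                       (integral\<^sup>L N (\<lambda>y. c2 y p *\<^sub>R (1::real)), integral\<^sup>L N (\<lambda>y. c2 y p *\<^sub>R y)))
          = pop_em mu1s mu2s (mu1_0, mu2_0) (Suc t)"
    proof -
      obtain m1 m2 where pp: "p = (m1, m2)" by (cases p)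
      have "pop_em mu1s mu2s (mu1_0, mu2_0) (Suc t) = pop_em_step mu1s mu2s p"
        unfolding pop_em_def p_def by simp
      then show ?thesis unfolding G_def c1_def c2_def pp pop_em_step_def N_def by simp
    qed
    show ?case using GF unfolding eqS eqE .
  qed
  show ?thesis
  proof (intro allI impI conjI)
    fix t and \<epsilon> :: real assume e: "\<epsilon> > 0"
    show "(\<lambda>n. measure M {\<omega> \<in> space M. dist (fst (samp_em n (\<lambda>i. Y i \<omega>) (mu1_0, mu2_0) t))
               (fst (pop_em mu1s mu2s (mu1_0, mu2_0) t)) > \<epsilon>}) \<longlonglongrightarrow> 0"
      by (rule cip_final[OF P cip_cont[OF P claim[of t]] e]) (intro continuous_intros)
    show "(\<lambda>n. measure M {\<omega> \<in> space M. dist (snd (samp_em n (\<lambda>i. Y i \<omega>) (mu1_0, mu2_0) t))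
               (snd (pop_em mu1s mu2s (mu1_0, mu2_0) t)) > \<epsilon>}) \<longlonglongrightarrow> 0"
      by (rule cip_final[OF P cip_cont[OF P claim[of t]] e]) (intro continuous_intros)
  qed
qed


end
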